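(* Let $k\ge 2$ be an integer and let $J$ be a $k$-januarial. Then every vertex of the common graph $\Upsilon$ of $J$ has even valency.
   Context: Let $\Delta(2,k,\ell)=\langle x,y:x^2=y^k=(xy)^\ell=1\rangle$, acting on a finite set $S$. The coset graph has: - vertex set $S$; - an undirected $x$-edge joining each pair of points transposed by $x$ (points fixed by $x$ carry no $x$-edge); - a directed $y$-edge $u\to uy$. It is $2$-cell embedded in a closed orientable surface via the rotation system (incoming $y$-edge, outgoing $y$-edge, $x$-edge) at each vertex. The faces are $y$-faces (boundary label $y^n$, $n\mid k$) and $xy$-faces (boundary label $(xy)^m$). This is the coset diagram. A $k$-januarial is the coset diagram of an action of $\Delta(2,k,\ell)$, for some $\ell$, in which $\langle xy\rangle$ has exactly two orbits, each of size $|S|/2$. Let $S_1,S_2$ be the closures of its two $xy$-faces. Collapsing each $y$-face to a point gives the companion graph/diagram, in which the $x$-edges become edges between the collapsed $y$-faces. Let $S_i'$ be the image of $S_i$. The common graph is $\Upsilon=S_1'\cap S_2'$. *)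

theory Defs
  imports "HOL-Combinatorics.Permutations"
begin

text \<open>Points are acted on from the right: u.x = x u, u.y = y u, and
  u.(xy) = (u.x).y = (y o x) u.\<close>

text \<open>Orbit of a point under the cyclic group generated by a permutation f of a
  finite set (non-negative powers suffice, since f has finite order).\<close>
definition cyc_orbit :: "('a \<Rightarrow> 'a) \<Rightarrow> 'a \<Rightarrow> 'a set" where
  "cyc_orbit f u = {(f ^^ n) u | n. True}"

definition triangle_action :: "nat \<Rightarrow> 'a set \<Rightarrow> ('a \<Rightarrow> 'a) \<Rightarrow> ('a \<Rightarrow> 'a) \<Rightarrow> bool" where
  "triangle_action k S x y \<longleftrightarrow>
     finite S \<and> x permutes S \<and> y permutes S \<and>
     (\<forall>u\<in>S. x (x u) = u) \<and> (\<forall>u\<in>S. (y ^^ k) u = u) \<and>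
     (\<exists>l>0. \<forall>u\<in>S. ((y \<circ> x) ^^ l) u = u)"

text \<open>The orbits of <xy>; each corresponds to one xy-face of the coset diagram.\<close>
definition xy_orbits :: "'a set \<Rightarrow> ('a \<Rightarrow> 'a) \<Rightarrow> ('a \<Rightarrow> 'a) \<Rightarrow> 'a set set" where
  "xy_orbits S x y = {cyc_orbit (y \<circ> x) u | u. u \<in> S}"

definition januarial :: "nat \<Rightarrow> 'a set \<Rightarrow> ('a \<Rightarrow> 'a) \<Rightarrow> ('a \<Rightarrow> 'a) \<Rightarrow> bool" where
  "januarial k S x y \<longleftrightarrow>
     triangle_action k S x y \<and> card (xy_orbits S x y) = 2 \<and>
     (\<forall>F\<in>xy_orbits S x y. 2 * card F = card S)"

text \<open>Closure of the xy-face with point set F (an <xy>-orbit): its boundary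
  traverses u, ux, uxy, ... for u in F, so its vertices are F \<union> Fx and its
  x-edges are {u, ux} for u in F with ux \<noteq> u (its y-edges are collapsed in the
  companion diagram).\<close>
definition face_vertices :: "('a \<Rightarrow> 'a) \<Rightarrow> 'a set \<Rightarrow> 'a set" where
  "face_vertices x F = F \<union> x ` F"

definition face_xedges :: "('a \<Rightarrow> 'a) \<Rightarrow> 'a set \<Rightarrow> 'a set set" where
  "face_xedges x F = {{u, x u} | u. u \<in> F \<and> x u \<noteq> u}"

text \<open>Companion diagram: vertices are the y-faces (orbits of <y>), the x-edge
  {u, ux} becomes an edge joining the y-faces of u and ux. Image S' of the closed
  face F: (vertex set, edge set).\<close>
definition companion_image ::
  "('a \<Rightarrow> 'a) \<Rightarrow> ('a \<Rightarrow> 'a) \<Rightarrow> 'a set \<Rightarrow> 'a set set \<times> 'a set set" where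
  "companion_image x y F = (cyc_orbit y ` face_vertices x F, face_xedges x F)"

definition common_graph ::
  "('a \<Rightarrow> 'a) \<Rightarrow> ('a \<Rightarrow> 'a) \<Rightarrow> 'a set \<Rightarrow> 'a set \<Rightarrow> 'a set set \<times> 'a set set" where
  "common_graph x y F1 F2 =
     (fst (companion_image x y F1) \<inter> fst (companion_image x y F2),
      snd (companion_image x y F1) \<inter> snd (companion_image x y F2))"

text \<open>Valency of a vertex Y (a y-face) in a subgraph G of the companion diagram:
  number of edge-ends at Y, i.e. darts u (points of S in Y) whose x-edge {u, ux}
  lies in G; a loop contributes 2.\<close>
definition valency ::
  "'a set \<Rightarrow> ('a \<Rightarrow> 'a) \<Rightarrow> ('a \<Rightarrow> 'a) \<Rightarrow> 'a set set \<times> 'a set set \<Rightarrow> 'a set \<Rightarrow> nat" where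
  "valency S x y G Y = card {u \<in> S. x u \<noteq> u \<and> {u, x u} \<in> snd G \<and> cyc_orbit y u = Y}"

end

theory Submission
  imports Defs
begin

lemma funpow_in_S:
  assumes "f permutes S" "a \<in> S" shows "(f ^^ n) a \<in> S"
  using assms by (induction n) (auto simp: permutes_in_image)

lemma funpow_period:
  assumes "\<forall>u\<in>S. (f ^^ l) u = u" "f permutes S" "a \<in> S"
  shows "(f ^^ (l * n)) a = a"
proof (induction n)
  case 0 then show ?case by simp
next
  case (Suc n)
  have "(f ^^ (l * Suc n)) a = (f ^^ l) ((f ^^ (l * n)) a)"
    by (simp add: funpow_add)
  also have "\<dots> = a" using Suc assms by simp
  finally show ?case .
qed

lemma orbit_self: "a \<in> cyc_orbit f a"
  unfolding cyc_orbit_def by (auto intro: exI[of _ 0])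

lemma orbit_step: "z \<in> cyc_orbit f a \<Longrightarrow> f z \<in> cyc_orbit f a"
proof -
  assume "z \<in> cyc_orbit f a"
  then obtain n where "z = (f ^^ n) a" unfolding cyc_orbit_def by auto
  then have "f z = (f ^^ Suc n) a" by simp
  then show ?thesis unfolding cyc_orbit_def by blast
qed

lemma orbit_subset:
  assumes "f permutes S" "a \<in> S" shows "cyc_orbit f a \<subseteq> S"
  using funpow_in_S[OF assms] unfolding cyc_orbit_def by auto

lemma orbit_eq:
  assumes "\<forall>u\<in>S. (f ^^ l) u = u" "l > 0" "f permutes S" "a \<in> S"
    and "z \<in> cyc_orbit f a"
  shows "cyc_orbit f z = cyc_orbit f a"
proof -
  obtain n where z: "z = (f ^^ n) a" using assms(5) unfolding cyc_orbit_def by auto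
  have "a = (f ^^ (l * n)) a" using funpow_period[OF assms(1,3,4)] by simp
  also have "l * n = (l * n - n) + n" using assms(2) by simp
  also have "(f ^^ ((l * n - n) + n)) a = (f ^^ (l * n - n)) z"
    by (simp add: z funpow_add)
  finally have a: "a = (f ^^ (l * n - n)) z" .
  show ?thesis
  proof
    show "cyc_orbit f z \<subseteq> cyc_orbit f a"
    proof
      fix w assume "w \<in> cyc_orbit f z"
      then obtain m where "w = (f ^^ m) z" unfolding cyc_orbit_def by auto
      then have "w = (f ^^ (m + n)) a" by (simp add: z funpow_add)
      then show "w \<in> cyc_orbit f a" unfolding cyc_orbit_def by blast
    qed
    show "cyc_orbit f a \<subseteq> cyc_orbit f z"
    proof
      fix w assume "w \<in> cyc_orbit f a"
      then obtain m where "w = (f ^^ m) a" unfolding cyc_orbit_def by auto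
      then have "w = (f ^^ m) ((f ^^ (l * n - n)) z)" using a by metis
      then have "w = (f ^^ (m + (l * n - n))) z" by (simp add: funpow_add)
      then show "w \<in> cyc_orbit f z" unfolding cyc_orbit_def by blast
    qed
  qed
qed

lemma parity_count:
  fixes c :: "'a \<Rightarrow> bool"
  assumes "finite Y" "y ` Y = Y" "inj_on y Y"
  shows "even (card {w\<in>Y. c w \<noteq> c (y w)})"
proof -
  let ?A = "{w\<in>Y. c w \<and> \<not> c (y w)}"
  let ?B = "{w\<in>Y. \<not> c w \<and> c (y w)}"
  let ?C = "{w\<in>Y. c w \<and> c (y w)}"
  have fin: "finite ?A" "finite ?B" "finite ?C" using assms(1) by auto
  have "{w\<in>Y. c w} = ?C \<union> ?A" by auto
  then have 1: "card {w\<in>Y. c w} = card ?C + card ?A"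
    using fin by (simp add: card_Un_disjoint disjoint_iff)
  have "{w\<in>Y. c (y w)} = ?C \<union> ?B" by auto
  then have 2: "card {w\<in>Y. c (y w)} = card ?C + card ?B"
    using fin by (simp add: card_Un_disjoint disjoint_iff)
  have "y ` {w\<in>Y. c (y w)} = {v\<in>Y. c v}" using assms(2) by auto
  moreover have "inj_on y {w\<in>Y. c (y w)}" using assms(3) by (rule inj_on_subset) auto
  ultimately have 3: "card {w\<in>Y. c (y w)} = card {w\<in>Y. c w}"
    by (metis card_image)
  have "{w\<in>Y. c w \<noteq> c (y w)} = ?A \<union> ?B" by auto
  then have "card {w\<in>Y. c w \<noteq> c (y w)} = card ?A + card ?B"
    using fin by (simp add: card_Un_disjoint disjoint_iff)
  then show ?thesis using 1 2 3 by simp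
qed

lemma edge_iff:
  assumes "\<forall>u\<in>S. x (x u) = u" "u \<in> S" "x u \<noteq> u"
  shows "{u, x u} \<in> face_xedges x F \<longleftrightarrow> u \<in> F \<or> x u \<in> F"
proof
  assume "{u, x u} \<in> face_xedges x F"
  then obtain a where a: "{u, x u} = {a, x a}" "a \<in> F" unfolding face_xedges_def by auto
  then have "a \<in> {u, x u}" by simp
  then have "a = u \<or> a = x u" by simp
  then show "u \<in> F \<or> x u \<in> F" using a by auto
next
  assume h: "u \<in> F \<or> x u \<in> F"
  show "{u, x u} \<in> face_xedges x F"
  proof (cases "u \<in> F")
    case True then show ?thesis using assms unfolding face_xedges_def by auto
  next
    case False
    then have "x u \<in> F" using h by auto
    moreover have "x (x u) = u" using assms by auto
    ultimately have "{u, x u} = {x u, x (x u)} \<and> x u \<in> F \<and> x (x u) \<noteq> x u"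
      using assms by auto
    then show ?thesis unfolding face_xedges_def by blast
  qed
qed

theorem proposition2:
  fixes k :: nat and S :: "'a set" and x y :: "'a \<Rightarrow> 'a"
  assumes "k \<ge> 2"
    and "januarial k S x y"
    and "F1 \<in> xy_orbits S x y" and "F2 \<in> xy_orbits S x y" and "F1 \<noteq> F2"
    and "Y \<in> fst (common_graph x y F1 F2)"
  shows "even (valency S x y (common_graph x y F1 F2) Y)"
proof -
  have fS: "finite S" and xp: "x permutes S" and yp: "y permutes S"
    and xx: "\<forall>u\<in>S. x (x u) = u" and yk: "\<forall>u\<in>S. (y ^^ k) u = u"
    using assms(2) unfolding januarial_def triangle_action_def by auto
  obtain l where l: "l > 0" "\<forall>u\<in>S. ((y \<circ> x) ^^ l) u = u"
    using assms(2) unfolding januarial_def triangle_action_def by auto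
  have cO: "card (xy_orbits S x y) = 2" using assms(2) unfolding januarial_def by auto
  have fp: "(y \<circ> x) permutes S" using xp yp by (rule permutes_compose)
  have k0: "k > 0" using assms(1) by simp
  obtain a1 where a1: "a1 \<in> S" "F1 = cyc_orbit (y \<circ> x) a1"
    using assms(3) unfolding xy_orbits_def by auto
  obtain a2 where a2: "a2 \<in> S" "F2 = cyc_orbit (y \<circ> x) a2"
    using assms(4) unfolding xy_orbits_def by auto
  have finO: "finite (xy_orbits S x y)" using cO by (metis card.infinite zero_neq_numeral)
  have "{F1, F2} = xy_orbits S x y"
    using assms(3,4,5) cO finO by (intro card_subset_eq) auto
  then have cover: "w \<in> F1 \<or> w \<in> F2" if "w \<in> S" for w
    using that orbit_self[of w "y \<circ> x"] unfolding xy_orbits_def by blast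
  have disj: "\<not> (w \<in> F1 \<and> w \<in> F2)" for w
  proof
    assume "w \<in> F1 \<and> w \<in> F2"
    then have "cyc_orbit (y \<circ> x) w = F1" "cyc_orbit (y \<circ> x) w = F2"
      using orbit_eq[OF l(2) l(1) fp a1(1), of w] orbit_eq[OF l(2) l(1) fp a2(1), of w]
        a1(2) a2(2) by simp_all
    then show False using assms(5) by simp
  qed
  have F1S: "F1 \<subseteq> S" using orbit_subset[OF fp a1(1)] a1 by simp
  have xS: "x w \<in> S" if "w \<in> S" for w using xp that by (simp add: permutes_in_image)
  have yS: "y w \<in> S" if "w \<in> S" for w using yp that by (simp add: permutes_in_image)
  have cy: "(y w \<in> F1) = (x w \<in> F1)" if "w \<in> S" for w
  proof -
    have yw: "y w = (y \<circ> x) (x w)" using xx that by simp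
    show ?thesis
    proof (cases "x w \<in> F1")
      case True then show ?thesis using orbit_step[of "x w" "y \<circ> x" a1] a1 yw by simp
    next
      case False
      then have "x w \<in> F2" using cover xS that by blast
      then have "y w \<in> F2" using orbit_step[of "x w" "y \<circ> x" a2] a2 yw by simp
      then show ?thesis using False disj by blast
    qed
  qed
  have "Y \<in> cyc_orbit y ` (F1 \<union> x ` F1)"
    using assms(6) unfolding common_graph_def companion_image_def face_vertices_def
    by simp
  then obtain v where v0: "v \<in> F1 \<union> x ` F1" "Y = cyc_orbit y v" by (rule imageE) simp
  have v: "v \<in> S" "Y = cyc_orbit y v" using v0 F1S xS by auto
  have YS: "Y \<subseteq> S" using orbit_subset[OF yp v(1)] v by simp
  have finY: "finite Y" using YS fS by (rule finite_subset)
  have injY: "inj_on y Y" using yp by (meson permutes_inj inj_on_subset subset_UNIV)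
  have yY: "y ` Y = Y"
    using finY injY orbit_step[of _ y v] v by (intro endo_inj_surj) auto
  have orbY: "(cyc_orbit y u = Y) = (u \<in> Y)" if "u \<in> S" for u
  proof
    assume "cyc_orbit y u = Y" then show "u \<in> Y" using orbit_self[of u y] by simp
  next
    assume "u \<in> Y" then show "cyc_orbit y u = Y"
      using orbit_eq[OF yk k0 yp v(1), of u] v(2) by simp
  qed
  have eq: "{u \<in> S. x u \<noteq> u \<and> {u, x u} \<in> snd (common_graph x y F1 F2) \<and> cyc_orbit y u = Y}
      = {w\<in>Y. (w \<in> F1) \<noteq> (y w \<in> F1)}"
  proof (rule set_eqI, rule iffI)
    fix u assume "u \<in> {u \<in> S. x u \<noteq> u \<and> {u, x u} \<in> snd (common_graph x y F1 F2) \<and> cyc_orbit y u = Y}"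
    then have u: "u \<in> S" "x u \<noteq> u" "{u, x u} \<in> face_xedges x F1" "{u, x u} \<in> face_xedges x F2"
      "cyc_orbit y u = Y"
      unfolding common_graph_def companion_image_def by auto
    have "u \<in> F1 \<or> x u \<in> F1" "u \<in> F2 \<or> x u \<in> F2"
      using u edge_iff[OF xx] by auto
    then have "(u \<in> F1) \<noteq> (x u \<in> F1)" using disj by blast
    then show "u \<in> {w\<in>Y. (w \<in> F1) \<noteq> (y w \<in> F1)}" using u orbY cy by auto
  next
    fix u assume "u \<in> {w\<in>Y. (w \<in> F1) \<noteq> (y w \<in> F1)}"
    then have u: "u \<in> Y" "(u \<in> F1) \<noteq> (x u \<in> F1)" using YS cy by auto
    have uS: "u \<in> S" using u YS by auto
    have ne: "x u \<noteq> u" using u by auto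
    have "u \<in> F1 \<or> x u \<in> F1" "u \<in> F2 \<or> x u \<in> F2"
      using u cover[OF uS] cover[OF xS[OF uS]] by auto
    then have "{u, x u} \<in> face_xedges x F1" "{u, x u} \<in> face_xedges x F2"
      using edge_iff[OF xx uS ne] by auto
    then show "u \<in> {u \<in> S. x u \<noteq> u \<and> {u, x u} \<in> snd (common_graph x y F1 F2) \<and> cyc_orbit y u = Y}"
      using uS ne orbY u unfolding common_graph_def companion_image_def by auto
  qed
  show ?thesis unfolding valency_def eq
    using parity_count[OF finY yY injY, of "\<lambda>w. w \<in> F1"] by simp
qed

end
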